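(* Let $\vec G_0$ be a directed graph with Eulerian Laplacian $\mathbf{L}_{\vec G_0}$, let $\beta>0$, and let $\vec G_1 = \mathcal{U}^{(\beta)}(\vec G_0)$ be its $\beta$-partial-symmetrization. Then $\mathbf{L}_{\vec G_1}^+$ is a $\big(1-\frac{1}{1+\beta}\big)$-approximate pseudoinverse of $\mathbf{L}_{\vec G_0}$ with respect to $\mathbf{U}_{\mathbf{L}_{\vec G_1}}$.
   Context: For a weighted directed graph $\vec G$ with adjacency matrix $\mathbf{A}_{\vec G}(i,j)=\omega((i,j))$ and diagonal out-degree matrix $\mathbf{D}_{\vec G}$, $\mathbf{L}_{\vec G}=\mathbf{D}_{\vec G}-\mathbf{A}_{\vec G}^T$; it is Eulerian if $\mathbf{L}_{\vec G}\mathbf{1}=\mathbf{0}$. The undirectification $\mathcal{U}(\vec G)$ is the undirected graph with edge $\{u,v\}$ of weight $\frac12(\omega(u,v)+\omega(v,u))$ (with $\omega=0$ for non-edges), viewed as a directed graph with both orientations. The $\beta$-partial-symmetrization is $\mathcal{U}^{(\beta)}(\vec G)=\beta\cdot\mathcal{U}(\vec G)+\vec G$, so $\mathbf{L}_{\mathcal{U}^{(\beta)}(\vec G)}=\beta\mathbf{U}_{\mathbf{L}_{\vec G}}+\mathbf{L}_{\vec G}$, where $\mathbf{U}_{\mathbf{M}}=\frac12(\mathbf{M}+\mathbf{M}^T)$. For PSD $\mathbf{H}$, $\|\mathbf{M}\|_{\mathbf{H}\to\mathbf{H}}=\max_{\mathbf{x}\neq0}\|\mathbf{M}\mathbf{x}\|_{\mathbf{H}}/\|\mathbf{x}\|_{\mathbf{H}}$,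 $\|\mathbf{x}\|_{\mathbf{H}}=\sqrt{\mathbf{x}^T\mathbf{H}\mathbf{x}}$. $\mathbf{Z}$ is an $\epsilon$-approximate pseudoinverse of $\mathbf{M}$ with respect to PSD $\mathbf{U}$ if $\ker(\mathbf{U})\subseteq\ker(\mathbf{M})=\ker(\mathbf{M}^T)=\ker(\mathbf{Z})=\ker(\mathbf{Z}^T)$ and $\|\mathbf{I}_{\operatorname{im}(\mathbf{M})}-\mathbf{Z}\mathbf{M}\|_{\mathbf{U}\to\mathbf{U}}\le\epsilon$. *)

theory Defs
  imports "HOL-Analysis.Analysis"
begin

text \<open>A weighted directed graph on the finite vertex type 'n is given by its
  weight function w, with w i j = omega((i,j)) >= 0 (w i j = 0 for non-edges).\<close>

definition weighted_digraph :: "('n::finite \<Rightarrow> 'n \<Rightarrow> real) \<Rightarrow> bool" where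
  "weighted_digraph w \<longleftrightarrow> (\<forall>i j. 0 \<le> w i j)"

definition adj_mat :: "('n::finite \<Rightarrow> 'n \<Rightarrow> real) \<Rightarrow> real^'n^'n" where
  "adj_mat w = (\<chi> i j. w i j)"

definition outdeg_mat :: "('n::finite \<Rightarrow> 'n \<Rightarrow> real) \<Rightarrow> real^'n^'n" where
  "outdeg_mat w = (\<chi> i j. if i = j then (\<Sum>k\<in>UNIV. w i k) else 0)"

definition dlap :: "('n::finite \<Rightarrow> 'n \<Rightarrow> real) \<Rightarrow> real^'n^'n" where
  "dlap w = outdeg_mat w - transpose (adj_mat w)"

definition eulerian :: "('n::finite \<Rightarrow> 'n \<Rightarrow> real) \<Rightarrow> bool" where
  "eulerian w \<longleftrightarrow> dlap w *v (\<chi> i. 1) = 0"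

text \<open>Undirectification, viewed as a directed graph with both orientations.\<close>
definition undirectify :: "('n \<Rightarrow> 'n \<Rightarrow> real) \<Rightarrow> ('n \<Rightarrow> 'n \<Rightarrow> real)" where
  "undirectify w = (\<lambda>u v. (w u v + w v u) / 2)"

definition partial_sym :: "real \<Rightarrow> ('n \<Rightarrow> 'n \<Rightarrow> real) \<Rightarrow> ('n \<Rightarrow> 'n \<Rightarrow> real)" where
  "partial_sym \<beta> w = (\<lambda>u v. \<beta> * undirectify w u v + w u v)"

definition sym_part :: "real^'n^'n \<Rightarrow> real^'n^'n" where
  "sym_part M = (1/2) *\<^sub>R (M + transpose M)"

definition psd :: "real^'n^'n \<Rightarrow> bool" where
  "psd H \<longleftrightarrow> transpose H = H \<and> (\<forall>x. 0 \<le> x \<bullet> (H *v x))"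

definition ker_mat :: "real^'n^'m \<Rightarrow> (real^'n) set" where
  "ker_mat M = {x. M *v x = 0}"

definition im_mat :: "real^'n^'m \<Rightarrow> (real^'m) set" where
  "im_mat M = range (\<lambda>x. M *v x)"

definition pinv :: "real^'n^'n \<Rightarrow> real^'n^'n" where
  "pinv M = (THE X. M ** X ** M = M \<and> X ** M ** X = X \<and>
                    transpose (M ** X) = M ** X \<and> transpose (X ** M) = X ** M)"

definition proj_im :: "real^'n^'n \<Rightarrow> real^'n^'n" where
  "proj_im M = (THE P. transpose P = P \<and> P ** P = P \<and> im_mat P = im_mat M)"

definition hnorm :: "real^'n^'n \<Rightarrow> real^'n \<Rightarrow> real" where
  "hnorm H x = sqrt (x \<bullet> (H *v x))"

definition hopnorm :: "real^'n^'n \<Rightarrow> real^'n^'n \<Rightarrow> real" where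
  "hopnorm H M = Sup {hnorm H (M *v x) / hnorm H x | x. x \<noteq> 0}"

definition approx_pinv :: "real \<Rightarrow> real^'n^'n \<Rightarrow> real^'n^'n \<Rightarrow> real^'n^'n \<Rightarrow> bool" where
  "approx_pinv \<epsilon> Z M U \<longleftrightarrow>
     psd U \<and>
     ker_mat U \<subseteq> ker_mat M \<and> ker_mat M = ker_mat (transpose M) \<and>
     ker_mat (transpose M) = ker_mat Z \<and> ker_mat Z = ker_mat (transpose Z) \<and>
     hopnorm U (proj_im M - Z ** M) \<le> \<epsilon>"

end

theory Submission
  imports Defs
begin

lemma inner_transpose: "(transpose A *v x) \<bullet> y = x \<bullet> ((A::real^'n^'n) *v y)"
  by (simp add: transpose_matrix_vector dot_lmul_matrix)

lemma vec_eq_by_inner: "(\<And>z. (a::real^'n) \<bullet> z = b \<bullet> z) \<Longrightarrow> a = b"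
  by (metis inner_diff_left inner_eq_zero_iff right_minus_eq)

lemma sym_by_inner:
  assumes "\<And>x y. (A *v x) \<bullet> y = x \<bullet> ((A::real^'n^'n) *v y)"
  shows "transpose A = A"
proof -
  have "transpose A *v y = A *v y" for y
    by (rule vec_eq_by_inner) (metis assms inner_transpose inner_commute)
  then show ?thesis by (simp add: matrix_eq)
qed

lemma proj_exists:
  fixes S :: "(real^'n) set"
  assumes "subspace S"
  obtains P :: "real^'n^'n" where "\<And>x. P *v x \<in> S" "\<And>x w. w \<in> S \<Longrightarrow> (x - P *v x) \<bullet> w = 0"
proof -
  obtain B where B: "0 \<notin> B" "B \<subseteq> S" "pairwise orthogonal B" "independent B"
                  "card B = dim S" "span B = S"
    using orthogonal_basis_subspace[OF assms] by blast
  define p where "p = (\<lambda>x. \<Sum>b\<in>B. (b \<bullet> x / (b \<bullet> b)) *\<^sub>R b)"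
  have lin: "linear p" unfolding p_def
    by (rule linearI) (simp_all add: inner_add_right add_divide_distrib scaleR_add_left sum.distrib scaleR_sum_right)
  show ?thesis
  proof
    fix x
    have "p x \<in> span B" unfolding p_def
      by (intro span_sum span_mul span_base) 
    then show "matrix p *v x \<in> S"
      using matrix_works[of p] lin B(6) unfolding linear_matrix_vector_mul_eq
      by simp
  next
    fix x w assume "w \<in> S"
    then have "orthogonal w (x - p x)" unfolding p_def
      using Gram_Schmidt_step[OF B(3)] B(6) by blast
    then show "(x - matrix p *v x) \<bullet> w = 0"
      using matrix_works[of p] lin unfolding linear_matrix_vector_mul_eq
      by (simp add: orthogonal_def inner_commute)
  qed
qed

lemma proj_props:
  fixes P :: "real^'n^'n"
  assumes S: "subspace S" and P1: "\<And>x. P *v x \<in> S" and P2: "\<And>x w. w \<in> S \<Longrightarrow> (x - P *v x) \<bullet> w = 0"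
  shows "\<And>w. w \<in> S \<Longrightarrow> P *v w = w" "transpose P = P" "P ** P = P"
proof -
  show fixP: "P *v w = w" if "w \<in> S" for w
  proof -
    have "w - P *v w \<in> S" using S that P1 by (simp add: subspace_diff)
    then have "(w - P *v w) \<bullet> (w - P *v w) = 0" using P2 by blast
    then show ?thesis by simp
  qed
  have "(P *v x) \<bullet> y = x \<bullet> (P *v y)" for x y
  proof -
    have "(P *v x) \<bullet> y = (P *v x) \<bullet> (P *v y) + (y - P *v y) \<bullet> (P *v x)"
      by (simp add: inner_diff_left inner_diff_right inner_commute)
    also have "\<dots> = (P *v x) \<bullet> (P *v y)" using P1 P2 by simp
    also have "\<dots> = x \<bullet> (P *v y) - (x - P *v x) \<bullet> (P *v y)"
      by (simp add: inner_diff_left)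
    also have "\<dots> = x \<bullet> (P *v y)" using P1 P2 by simp
    finally show ?thesis .
  qed
  then show "transpose P = P" by (rule sym_by_inner)
  show "P ** P = P"
    by (simp add: matrix_eq flip: matrix_vector_mul_assoc) (simp add: fixP P1)
qed

definition is_mp :: "real^'n^'n \<Rightarrow> real^'n^'n \<Rightarrow> bool" where
  "is_mp M X \<longleftrightarrow> M ** X ** M = M \<and> X ** M ** X = X \<and>
                    transpose (M ** X) = M ** X \<and> transpose (X ** M) = X ** M"

lemma mp_unique:
  assumes "is_mp M X" "is_mp M Y" shows "X = Y"
proof -
  have X1: "M ** X ** M = M" and X2: "X ** M ** X = X" and X3: "transpose (M ** X) = M ** X"
    and X4: "transpose (X ** M) = X ** M" using assms(1) unfolding is_mp_def by auto
  have Y1: "M ** Y ** M = M" and Y2: "Y ** M ** Y = Y" and Y3: "transpose (M ** Y) = M ** Y"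
    and Y4: "transpose (Y ** M) = Y ** M" using assms(2) unfolding is_mp_def by auto
  have "X = X ** (M ** X)" using X2 by (simp add: matrix_mul_assoc)
  also have "\<dots> = X ** transpose X ** transpose M" using X3
    by (metis matrix_mul_assoc matrix_transpose_mul)
  also have "\<dots> = X ** transpose X ** transpose (M ** Y ** M)" using Y1 by simp
  also have "\<dots> = X ** (transpose (M ** X)) ** transpose (M ** Y)"
    by (simp add: matrix_transpose_mul matrix_mul_assoc)
  also have "\<dots> = X ** M ** X ** M ** Y" using X3 Y3 by (simp add: matrix_mul_assoc)
  also have "\<dots> = X ** M ** Y" using X2 by simp
  finally have eX: "X = X ** M ** Y" .
  have "Y = (Y ** M) ** Y" using Y2 by simp
  also have "\<dots> = transpose M ** transpose Y ** Y" using Y4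
    by (metis matrix_transpose_mul)
  also have "\<dots> = transpose (M ** X ** M) ** transpose Y ** Y" using X1 by simp
  also have "\<dots> = transpose (X ** M) ** transpose (Y ** M) ** Y"
    by (simp add: matrix_transpose_mul matrix_mul_assoc)
  also have "\<dots> = X ** M ** Y ** M ** Y" using X4 Y4 by (simp add: matrix_mul_assoc)
  also have "\<dots> = X ** M ** Y" using Y2 by (metis matrix_mul_assoc)
  finally show ?thesis using eX by simp
qed

lemma mp_exists: "\<exists>X. is_mp (M::real^'n^'n) X"
proof -
  define V where "V = range ((*v) (transpose M))"
  define W where "W = range ((*v) M)"
  have sV: "subspace V" unfolding V_def
    by (intro real_vector.linear_subspace_image subspace_UNIV matrix_vector_mul_linear)
  have sW: "subspace W" unfolding W_def
    by (intro real_vector.linear_subspace_image subspace_UNIV matrix_vector_mul_linear)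
  obtain PV where PV1: "\<And>x. PV *v x \<in> V" and PV2: "\<And>x w. w \<in> V \<Longrightarrow> (x - PV *v x) \<bullet> w = 0"
    using proj_exists[OF sV] by blast
  obtain PW where PW1: "\<And>x. PW *v x \<in> W" and PW2: "\<And>x w. w \<in> W \<Longrightarrow> (x - PW *v x) \<bullet> w = 0"
    using proj_exists[OF sW] by blast
  note PVp = proj_props[OF sV PV1 PV2]
  note PWp = proj_props[OF sW PW1 PW2]
  have a: "M *v (PV *v x) = M *v x" for x
  proof -
    let ?d = "M *v (x - PV *v x)"
    have "?d \<bullet> ?d = (transpose M *v ?d) \<bullet> (x - PV *v x)"
      by (metis inner_transpose inner_commute)
    also have "\<dots> = 0" by (simp add: PV2 V_def inner_commute)
    finally show ?thesis by (simp add: matrix_vector_mult_diff_distrib)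
  qed
  have inj: "inj_on ((*v) M) V"
  proof (rule inj_onI)
    fix v v' assume "v \<in> V" "v' \<in> V" and e: "M *v v = M *v v'"
    then obtain a b where ab: "v = transpose M *v a" "v' = transpose M *v b" unfolding V_def by blast
    have "(v - v') \<bullet> (v - v') = (transpose M *v (a - b)) \<bullet> (v - v')"
      using ab by (simp add: matrix_vector_mult_diff_distrib)
    also have "\<dots> = (a - b) \<bullet> (M *v (v - v'))" by (rule inner_transpose)
    also have "\<dots> = 0" using e by (simp add: matrix_vector_mult_diff_distrib)
    finally show "v = v'" by simp
  qed
  obtain g where g1: "range g \<subseteq> V" and g2: "linear g" and g3: "\<forall>v\<in>V. g (M *v v) = v"
    using real_vector.linear_exists_left_inverse_on[OF matrix_vector_mul_linear sV inj] by blast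
  define G where "G = matrix g"
  have G: "G *v y = g y" for y unfolding G_def
    using matrix_works g2 linear_matrix_vector_mul_eq by blast
  define X where "X = G ** PW"
  have XM: "X ** M = PV"
  proof (subst matrix_eq, intro allI)
    fix x
    have "(X ** M) *v x = g (PW *v (M *v x))" by (simp add: X_def G flip: matrix_vector_mul_assoc)
    also have "\<dots> = g (M *v x)" using PWp(1) W_def by simp
    also have "\<dots> = g (M *v (PV *v x))" by (simp add: a)
    also have "\<dots> = PV *v x" using g3 PV1 by blast
    finally show "(X ** M) *v x = PV *v x" .
  qed
  have MX: "M ** X = PW"
  proof (subst matrix_eq, intro allI)
    fix y
    obtain t where t: "PW *v y = M *v t" using PW1 W_def by blast
    have "(M ** X) *v y = M *v g (M *v t)" by (simp add: X_def G t flip: matrix_vector_mul_assoc)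
    also have "\<dots> = M *v g (M *v (PV *v t))" by (simp add: a)
    also have "\<dots> = M *v (PV *v t)" using g3 PV1 by simp
    also have "\<dots> = PW *v y" by (simp add: a t)
    finally show "(M ** X) *v y = PW *v y" .
  qed
  have MXM: "M ** X ** M = M" unfolding MX
    by (subst matrix_eq) (simp add: PWp(1)[unfolded W_def] flip: matrix_vector_mul_assoc)
  have XMX: "X ** M ** X = X" unfolding XM
  proof (subst matrix_eq, intro allI)
    fix y
    have "PV *v (G *v z) = G *v z" for z using PVp(1) g1 G by auto
    then show "(PV ** X) *v y = X *v y" by (simp add: X_def flip: matrix_vector_mul_assoc)
  qed
  show ?thesis unfolding is_mp_def using MXM XMX MX XM PVp PWp by blast
qed

lemma pinv_mp: "is_mp M (pinv M)"
proof -
  obtain X where X: "is_mp M X" using mp_exists by blast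
  have "pinv M = X" unfolding pinv_def
    by (rule the_equality) (use X mp_unique in \<open>auto simp: is_mp_def\<close>)
  then show ?thesis using X by simp
qed


lemma transpose_diff: "transpose (A - B) = transpose A - transpose (B::real^'n^'n)"
  by (simp add: transpose_def vec_eq_iff)
lemma transpose_add: "transpose (A + B) = transpose A + transpose (B::real^'n^'n)"
  by (simp add: transpose_def vec_eq_iff)

lemma delta_sum: "(\<Sum>j\<in>(UNIV::'n::finite set). (if i = j then a j else 0) * (x j::real)) = a i * x i"
proof -
  have "(\<Sum>j\<in>(UNIV::'n set). (if i = j then a j else 0) * x j) = (\<Sum>j\<in>UNIV. if i = j then a j * x j else 0)"
    by (rule sum.cong) auto
  then show ?thesis by simp
qed

lemma delta_sum': "(\<Sum>j\<in>(UNIV::'n::finite set). (if j = i then a j else 0) * (x j::real)) = a i * x i"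
  using delta_sum[of i a x] by (simp add: eq_commute)

lemma dlap_mv: "(dlap w *v x) $ i = (\<Sum>k\<in>UNIV. w i k) * x$i - (\<Sum>j\<in>UNIV. w j i * x$j)"
  unfolding dlap_def matrix_vector_mult_diff_rdistrib
  by (simp add: matrix_vector_mult_def outdeg_mat_def adj_mat_def transpose_def delta_sum)

lemma dlapT_mv: "(transpose (dlap w) *v x) $ i = (\<Sum>k\<in>UNIV. w i k) * x$i - (\<Sum>j\<in>UNIV. w i j * x$j)"
  unfolding dlap_def transpose_diff matrix_vector_mult_diff_rdistrib
  by (simp add: matrix_vector_mult_def outdeg_mat_def adj_mat_def transpose_def delta_sum'[of i "\<lambda>j. sum (w j) UNIV" "\<lambda>j. x$j"])

lemma euler_deg:
  assumes "eulerian w" shows "(\<Sum>k\<in>UNIV. w i k) = (\<Sum>j\<in>UNIV. w j i)"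
proof -
  have "(dlap w *v (\<chi> i. 1)) $ i = 0" using assms unfolding eulerian_def by simp
  then show ?thesis by (simp add: dlap_mv)
qed

lemma quad:
  fixes w :: "'n::finite \<Rightarrow> 'n \<Rightarrow> real"
  assumes "eulerian w"
  shows "2 * (x \<bullet> (dlap w *v x)) = (\<Sum>i\<in>UNIV. \<Sum>j\<in>UNIV. w i j * (x$i - x$j)^2)"
proof -
  have L: "x \<bullet> (dlap w *v x) = (\<Sum>i\<in>UNIV. (\<Sum>k\<in>UNIV. w i k) * x$i^2) - (\<Sum>i\<in>UNIV. \<Sum>j\<in>UNIV. w j i * x$i * x$j)"
    by (simp add: inner_vec_def dlap_mv right_diff_distrib sum_subtractf sum_distrib_left power2_eq_square algebra_simps)
  have A: "(\<Sum>i\<in>UNIV. \<Sum>j\<in>UNIV. w i j * x$i^2) = (\<Sum>i\<in>UNIV. (\<Sum>k\<in>UNIV. w i k) * x$i^2)"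
    by (simp add: sum_distrib_right)
  have B: "(\<Sum>i\<in>UNIV. \<Sum>j\<in>UNIV. w i j * x$j^2) = (\<Sum>i\<in>UNIV. (\<Sum>k\<in>UNIV. w i k) * x$i^2)"
  proof -
    have "(\<Sum>i\<in>UNIV. \<Sum>j\<in>UNIV. w i j * x$j^2) = (\<Sum>j\<in>UNIV. \<Sum>i\<in>UNIV. w i j * x$j^2)"
      by (rule sum.swap)
    also have "\<dots> = (\<Sum>j\<in>UNIV. (\<Sum>i\<in>UNIV. w i j) * x$j^2)" by (simp add: sum_distrib_right)
    also have "\<dots> = (\<Sum>j\<in>UNIV. (\<Sum>k\<in>UNIV. w j k) * x$j^2)" using euler_deg[OF assms] by simp
    finally show ?thesis .
  qed
  have C: "(\<Sum>i\<in>UNIV. \<Sum>j\<in>UNIV. w j i * x$i * x$j) = (\<Sum>i\<in>UNIV. \<Sum>j\<in>UNIV. w i j * x$i * x$j)"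
    by (subst sum.swap) (simp add: mult.commute mult.left_commute)
  have "(\<Sum>i\<in>UNIV. \<Sum>j\<in>UNIV. w i j * (x$i - x$j)^2) =
     (\<Sum>i\<in>UNIV. \<Sum>j\<in>UNIV. w i j * x$i^2) + (\<Sum>i\<in>UNIV. \<Sum>j\<in>UNIV. w i j * x$j^2)
      - 2 * (\<Sum>i\<in>UNIV. \<Sum>j\<in>UNIV. w i j * x$i * x$j)"
    by (simp add: power2_diff algebra_simps sum.distrib sum_subtractf sum_distrib_left)
  then show ?thesis using L A B C by simp
qed

definition cst :: "('n::finite \<Rightarrow> 'n \<Rightarrow> real) \<Rightarrow> real^'n \<Rightarrow> bool" where
  "cst w x \<longleftrightarrow> (\<forall>i j. w i j \<noteq> 0 \<longrightarrow> x$i = x$j)"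

lemma quad_nonneg:
  assumes "weighted_digraph w" "eulerian w" shows "0 \<le> x \<bullet> (dlap w *v x)"
proof -
  have "0 \<le> (\<Sum>i\<in>UNIV. \<Sum>j\<in>UNIV. w i j * (x$i - x$j)^2)"
    using assms(1) unfolding weighted_digraph_def by (intro sum_nonneg mult_nonneg_nonneg) auto
  then show ?thesis using quad[OF assms(2), of x] by simp
qed

lemma quad_zero:
  assumes "weighted_digraph w" "eulerian w" "x \<bullet> (dlap w *v x) = 0" shows "cst w x"
  unfolding cst_def
proof (intro allI impI)
  fix i j assume ne: "w i j \<noteq> 0"
  have nn: "\<And>i j. 0 \<le> w i j * (x$i - x$j)^2"
    using assms(1) unfolding weighted_digraph_def by (intro mult_nonneg_nonneg) auto
  have "(\<Sum>i\<in>UNIV. \<Sum>j\<in>UNIV. w i j * (x$i - x$j)^2) = 0" using quad[OF assms(2), of x] assms(3) by simp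
  then have "\<forall>i\<in>UNIV. (\<Sum>j\<in>UNIV. w i j * (x$i - x$j)^2) = 0"
    by (subst sum_nonneg_eq_0_iff[symmetric]) (auto intro: sum_nonneg nn)
  then have "\<forall>j\<in>UNIV. w i j * (x$i - x$j)^2 = 0"
    by (subst sum_nonneg_eq_0_iff[symmetric]) (auto intro: nn)
  then have "w i j * (x$i - x$j)^2 = 0" by blast
  then show "x$i = x$j" using ne by simp
qed

lemma cst_L:
  assumes "eulerian w" "cst w x" shows "dlap w *v x = 0"
proof -
  have "(dlap w *v x) $ i = 0" for i
  proof -
    have h: "w j i * x$j = w j i * x$i" for j
      using assms(2) unfolding cst_def by (metis mult_zero_left)
    have "(\<Sum>j\<in>UNIV. w j i * x$j) = (\<Sum>j\<in>UNIV. w j i * x$i)" by (simp add: h)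
    then show ?thesis by (simp add: dlap_mv euler_deg[OF assms(1), of i] sum_distrib_right)
  qed
  then show ?thesis by (simp add: vec_eq_iff)
qed

lemma cst_LT:
  assumes "cst w x" shows "transpose (dlap w) *v x = 0"
proof -
  have "(transpose (dlap w) *v x) $ i = 0" for i
  proof -
    have h: "w i j * x$j = w i j * x$i" for j
      using assms unfolding cst_def by (metis mult_zero_left)
    have "(\<Sum>j\<in>UNIV. w i j * x$j) = (\<Sum>j\<in>UNIV. w i j * x$i)" by (simp add: h)
    then show ?thesis by (simp add: dlapT_mv sum_distrib_right del: transpose_matrix_vector)
  qed
  then show ?thesis by (simp add: vec_eq_iff)
qed

lemma sym_part_mv: "sym_part M *v x = (1/2) *\<^sub>R (M *v x + transpose M *v x)"
  unfolding sym_part_def by (simp only: scaleR_matrix_vector_assoc[symmetric] matrix_vector_mult_add_rdistrib)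

lemma quad_T: "x \<bullet> (transpose M *v x) = x \<bullet> ((M::real^'n^'n) *v x)"
  by (subst inner_commute) (rule inner_transpose)

lemma quad_sym: "x \<bullet> (sym_part M *v x) = x \<bullet> ((M::real^'n^'n) *v x)"
  by (simp add: sym_part_mv inner_add_right quad_T del: transpose_matrix_vector)

lemma transpose_sym_part: "transpose (sym_part M) = sym_part (M::real^'n^'n)"
  unfolding sym_part_def by (simp add: transpose_scalar transpose_add add.commute)

declare transpose_matrix_vector[simp del]

lemma im_char: "im_mat (A::real^'n^'n) = {y. \<forall>v. transpose A *v v = 0 \<longrightarrow> v \<bullet> y = 0}"
proof (intro set_eqI iffI)
  fix y assume "y \<in> im_mat A"
  then obtain x where x: "y = A *v x" unfolding im_mat_def by blast
  show "y \<in> {y. \<forall>v. transpose A *v v = 0 \<longrightarrow> v \<bullet> y = 0}"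
  proof (intro CollectI allI impI)
    fix v assume "transpose A *v v = 0"
    then show "v \<bullet> y = 0" using x inner_transpose[of A v x] by simp
  qed
next
  fix y assume y: "y \<in> {y. \<forall>v. transpose A *v v = 0 \<longrightarrow> v \<bullet> y = 0}"
  define W where "W = im_mat A"
  have sW: "subspace W" unfolding W_def im_mat_def
    by (intro real_vector.linear_subspace_image subspace_UNIV matrix_vector_mul_linear)
  obtain P where P1: "\<And>x. P *v x \<in> W" and P2: "\<And>x w. w \<in> W \<Longrightarrow> (x - P *v x) \<bullet> w = 0"
    using proj_exists[OF sW] by blast
  define r where "r = y - P *v y"
  have "(transpose A *v r) \<bullet> x = 0" for x
    using P2[of "A *v x" y] unfolding inner_transpose r_def W_def im_mat_def by simp
  then have "transpose A *v r = 0" by (metis inner_eq_zero_iff)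
  then have "r \<bullet> y = 0" using y by simp
  moreover have "r \<bullet> (P *v y) = 0" using P1 P2 r_def by simp
  ultimately have "r \<bullet> r = 0" unfolding r_def by (simp add: inner_diff_right)
  then have "y = P *v y" unfolding r_def by simp
  then show "y \<in> im_mat A" using P1[of y] W_def by simp
qed

lemma im_eq: "(\<And>v. transpose A *v v = 0 \<longleftrightarrow> transpose B *v v = 0) \<Longrightarrow> im_mat (A::real^'n^'n) = im_mat (B::real^'n^'n)"
  unfolding im_char[of A] im_char[of B] by simp

lemma proj_unique:
  fixes P Q :: "real^'n^'n"
  assumes "transpose P = P" "P ** P = P" "transpose Q = Q" "Q ** Q = Q" "im_mat P = im_mat Q"
  shows "P = Q"
proof -
  have QP: "Q ** P = P"
  proof (subst matrix_eq, intro allI)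
    fix x
    obtain z where "P *v x = Q *v z" using assms(5) unfolding im_mat_def by (metis rangeE rangeI)
    then show "(Q ** P) *v x = P *v x" using assms(4) by (metis matrix_vector_mul_assoc)
  qed
  have PQ: "P ** Q = Q"
  proof (subst matrix_eq, intro allI)
    fix x
    obtain z where "Q *v x = P *v z" using assms(5) unfolding im_mat_def by (metis rangeE rangeI)
    then show "(P ** Q) *v x = Q *v x" using assms(2) by (metis matrix_vector_mul_assoc)
  qed
  have "P = transpose (Q ** P)" using QP assms(1) by simp
  also have "\<dots> = P ** Q" using assms(1,3) by (simp add: matrix_transpose_mul)
  finally show ?thesis using PQ by simp
qed

lemma proj_im_eq:
  assumes "transpose Q = Q" "Q ** Q = Q" "im_mat Q = im_mat (M::real^'n^'n)"
  shows "proj_im M = Q"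
  unfolding proj_im_def
proof (rule the_equality)
  show "transpose Q = Q \<and> Q ** Q = Q \<and> im_mat Q = im_mat M" using assms by simp
  fix P assume "transpose P = P \<and> P ** P = P \<and> im_mat P = im_mat M"
  then show "P = Q" using proj_unique[of P Q] assms by simp
qed

lemma mp_kerZ:
  assumes "is_mp L Z" shows "Z *v y = 0 \<longleftrightarrow> transpose L *v y = 0"
proof -
  have X1: "L ** Z ** L = L" and X2: "Z ** L ** Z = Z" and X3: "transpose (L ** Z) = L ** Z"
    and X4: "transpose (Z ** L) = Z ** L" using assms unfolding is_mp_def by auto
  have "transpose L = transpose ((L ** Z) ** L)" using X1 by simp
  also have "\<dots> = transpose L ** transpose (L ** Z)" by (rule matrix_transpose_mul)
  also have "\<dots> = transpose L ** L ** Z" using X3 by (simp add: matrix_mul_assoc)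
  finally have e1: "transpose L = transpose L ** L ** Z" .
  have "Z = Z ** (L ** Z)" using X2 by (simp add: matrix_mul_assoc)
  also have "\<dots> = Z ** transpose (L ** Z)" using X3 by simp
  also have "\<dots> = Z ** transpose Z ** transpose L" by (simp add: matrix_transpose_mul matrix_mul_assoc)
  finally have e2: "Z = Z ** transpose Z ** transpose L" .
  show ?thesis
  proof
    assume "Z *v y = 0"
    then have "(transpose L ** L ** Z) *v y = 0" by (simp flip: matrix_vector_mul_assoc)
    then show "transpose L *v y = 0" using e1 by simp
  next
    assume "transpose L *v y = 0"
    then have "(Z ** transpose Z ** transpose L) *v y = 0" by (simp flip: matrix_vector_mul_assoc)
    then show "Z *v y = 0" using e2 by simp
  qed
qed

lemma mp_kerZT:
  assumes "is_mp L Z" shows "transpose Z *v y = 0 \<longleftrightarrow> L *v y = 0"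
proof -
  have X1: "L ** Z ** L = L" and X2: "Z ** L ** Z = Z" and X3: "transpose (L ** Z) = L ** Z"
    and X4: "transpose (Z ** L) = Z ** L" using assms unfolding is_mp_def by auto
  have "L = L ** (Z ** L)" using X1 by (simp add: matrix_mul_assoc)
  also have "\<dots> = L ** transpose (Z ** L)" using X4 by simp
  also have "\<dots> = L ** transpose L ** transpose Z" by (simp add: matrix_transpose_mul matrix_mul_assoc)
  finally have e1: "L = L ** transpose L ** transpose Z" .
  have "transpose Z = transpose ((Z ** L) ** Z)" using X2 by simp
  also have "\<dots> = transpose Z ** transpose (Z ** L)" by (rule matrix_transpose_mul)
  also have "\<dots> = transpose Z ** Z ** L" using X4 by (simp add: matrix_mul_assoc)
  finally have e2: "transpose Z = transpose Z ** Z ** L" .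
  show ?thesis
  proof
    assume "transpose Z *v y = 0"
    then have "(L ** transpose L ** transpose Z) *v y = 0" by (simp flip: matrix_vector_mul_assoc)
    then show "L *v y = 0" using e1 by simp
  next
    assume "L *v y = 0"
    then have "(transpose Z ** Z ** L) *v y = 0" by (simp flip: matrix_vector_mul_assoc)
    then show "transpose Z *v y = 0" using e2 by simp
  qed
qed


lemma dlap_comp: "dlap w $ i $ j = (if i = j then (\<Sum>k\<in>UNIV. w i k) else 0) - w j i"
  by (simp add: dlap_def outdeg_mat_def adj_mat_def transpose_def)

lemma sym_comp: "sym_part M $ i $ j = (M $ i $ j + M $ j $ i) / 2"
  by (simp add: sym_part_def transpose_def)

lemma partial_sym_lap:
  assumes "eulerian w"
  shows "dlap (partial_sym \<beta> w) = dlap w + \<beta> *\<^sub>R sym_part (dlap w)"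
proof -
  have "(\<Sum>k\<in>UNIV. partial_sym \<beta> w i k) = (\<beta> + 1) * (\<Sum>k\<in>UNIV. w i k)" for i
  proof -
    have "(\<Sum>k\<in>UNIV. partial_sym \<beta> w i k) = \<beta> / 2 * (\<Sum>k\<in>UNIV. w i k) + \<beta> / 2 * (\<Sum>k\<in>UNIV. w k i) + (\<Sum>k\<in>UNIV. w i k)"
      by (simp add: partial_sym_def undirectify_def sum.distrib sum_distrib_left algebra_simps sum_divide_distrib add_divide_distrib)
    then show ?thesis using euler_deg[OF assms, of i] by (simp add: algebra_simps)
  qed
  then show ?thesis
    by (auto simp: vec_eq_iff dlap_comp sym_comp partial_sym_def undirectify_def field_simps)
qed

theorem lemma4p6:
  fixes w :: "'n::finite \<Rightarrow> 'n \<Rightarrow> real" and \<beta> :: real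
  assumes "weighted_digraph w"
    and "eulerian w"
    and "\<beta> > 0"
  shows "approx_pinv (1 - 1 / (1 + \<beta>)) (pinv (dlap (partial_sym \<beta> w))) (dlap w)
           (sym_part (dlap (partial_sym \<beta> w)))"
proof -
  note wd = assms(1) and eu = assms(2) and bp = assms(3)
  define L0 where "L0 = dlap w"
  define U0 where "U0 = sym_part L0"
  define L1 where "L1 = dlap (partial_sym \<beta> w)"
  define U1 where "U1 = sym_part L1"
  define Z where "Z = pinv L1"
  define c where "c = \<beta> / (1 + \<beta>)"
  have c_eq: "1 - 1 / (1 + \<beta>) = c" unfolding c_def using bp by (simp add: field_simps)
  have c0: "0 \<le> c" unfolding c_def using bp by simp
  have U0T: "transpose U0 = U0" unfolding U0_def by (rule transpose_sym_part)
  have L1eq: "L1 = L0 + \<beta> *\<^sub>R U0" unfolding L1_def L0_def U0_def by (rule partial_sym_lap[OF eu])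
  have U1eq: "U1 = (1 + \<beta>) *\<^sub>R U0"
    unfolding U1_def L1eq by (auto simp: vec_eq_iff sym_comp U0_def field_simps)
  have L1T: "transpose L1 = transpose L0 + \<beta> *\<^sub>R U0"
    unfolding L1eq by (simp add: transpose_add transpose_scalar U0T)
  have qU0: "x \<bullet> (U0 *v x) = x \<bullet> (L0 *v x)" for x unfolding U0_def by (rule quad_sym)
  have qL0: "0 \<le> x \<bullet> (L0 *v x)" for x unfolding L0_def by (rule quad_nonneg[OF wd eu])
  have qL1: "x \<bullet> (L1 *v x) = (1 + \<beta>) * (x \<bullet> (L0 *v x))" for x
    unfolding L1eq by (simp add: matrix_vector_mult_add_rdistrib inner_add_right
        scaleR_matrix_vector_assoc[symmetric] qU0 algebra_simps)
  have qz: "x \<bullet> (L0 *v x) = 0 \<Longrightarrow> cst w x" for x unfolding L0_def by (rule quad_zero[OF wd eu])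
  have kL0: "L0 *v x = 0 \<longleftrightarrow> cst w x" for x
    using qz cst_L[OF eu] unfolding L0_def by fastforce
  have kL0T: "transpose L0 *v x = 0 \<longleftrightarrow> cst w x" for x
    using qz[of x] cst_LT[of w x] quad_T[of x L0] unfolding L0_def by fastforce
  have kU0: "U0 *v x = 0 \<longleftrightarrow> cst w x" for x
  proof
    assume "U0 *v x = 0"
    then have "x \<bullet> (L0 *v x) = 0" using qU0[of x] by simp
    then show "cst w x" by (rule qz)
  next
    assume "cst w x" then show "U0 *v x = 0"
      using kL0[of x] kL0T[of x] unfolding U0_def sym_part_mv by simp
  qed
  have kU1: "U1 *v x = 0 \<longleftrightarrow> cst w x" for x
    using kU0[of x] bp unfolding U1eq by (simp add: scaleR_matrix_vector_assoc[symmetric])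
  have kL1: "L1 *v x = 0 \<longleftrightarrow> cst w x" for x
  proof
    assume "L1 *v x = 0"
    then have "x \<bullet> (L0 *v x) = 0" using qL1[of x] bp by simp
    then show "cst w x" by (rule qz)
  next
    assume "cst w x" then show "L1 *v x = 0"
      using kL0[of x] kU0[of x] unfolding L1eq
      by (simp add: matrix_vector_mult_add_rdistrib scaleR_matrix_vector_assoc[symmetric])
  qed
  have kL1T: "transpose L1 *v x = 0 \<longleftrightarrow> cst w x" for x
  proof
    assume "transpose L1 *v x = 0"
    then have "x \<bullet> (L1 *v x) = 0" using quad_T[of x L1] by simp
    then have "x \<bullet> (L0 *v x) = 0" using qL1[of x] bp by simp
    then show "cst w x" by (rule qz)
  next
    assume "cst w x" then show "transpose L1 *v x = 0"
      using kL0T[of x] kU0[of x] unfolding L1T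
      by (simp add: matrix_vector_mult_add_rdistrib scaleR_matrix_vector_assoc[symmetric])
  qed
  have mp: "is_mp L1 Z" unfolding Z_def by (rule pinv_mp)
  have kZ: "Z *v x = 0 \<longleftrightarrow> cst w x" for x using mp_kerZ[OF mp] kL1T by simp
  have kZT: "transpose Z *v x = 0 \<longleftrightarrow> cst w x" for x using mp_kerZT[OF mp] kL1 by simp
  have U1T: "transpose U1 = U1" unfolding U1_def by (rule transpose_sym_part)
  have qU1: "0 \<le> x \<bullet> (U1 *v x)" for x
    using qL0[of x] qU0[of x] bp unfolding U1eq
    by (simp add: scaleR_matrix_vector_assoc[symmetric])
  have psdU1: "psd U1" unfolding psd_def using U1T qU1 by simp
  have mpf: "L1 ** Z ** L1 = L1" "Z ** L1 ** Z = Z" "transpose (Z ** L1) = Z ** L1"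
    using mp unfolding is_mp_def by auto
  have imZL1: "im_mat (Z ** L1) = im_mat Z"
  proof
    show "im_mat (Z ** L1) \<subseteq> im_mat Z"
      unfolding im_mat_def by (auto simp flip: matrix_vector_mul_assoc)
    show "im_mat Z \<subseteq> im_mat (Z ** L1)"
    proof
      fix y assume "y \<in> im_mat Z"
      then obtain x where "y = Z *v x" unfolding im_mat_def by blast
      then have "y = (Z ** L1) *v (Z *v x)" using mpf(2) by (simp add: matrix_vector_mul_assoc)
      then show "y \<in> im_mat (Z ** L1)" unfolding im_mat_def by blast
    qed
  qed
  have imZ: "im_mat Z = im_mat L0" by (rule im_eq) (simp add: kZT kL0T)
  have P: "proj_im L0 = Z ** L1"
  proof (rule proj_im_eq)
    show "transpose (Z ** L1) = Z ** L1" by (rule mpf(3))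
    show "Z ** L1 ** (Z ** L1) = Z ** L1" using mpf(2) by (simp add: matrix_mul_assoc)
    show "im_mat (Z ** L1) = im_mat L0" using imZL1 imZ by simp
  qed
  have diff: "(proj_im L0 - Z ** L0) *v x = c *\<^sub>R (Z *v (U1 *v x))" for x
  proof -
    have "(proj_im L0 - Z ** L0) *v x = Z *v (L1 *v x) - Z *v (L0 *v x)"
      unfolding P by (simp add: matrix_vector_mult_diff_rdistrib matrix_vector_mul_assoc)
    also have "\<dots> = \<beta> *\<^sub>R (Z *v (U0 *v x))"
      unfolding L1eq by (simp add: matrix_vector_mult_add_rdistrib scaleR_matrix_vector_assoc[symmetric]
          matrix_vector_right_distrib matrix_vector_mult_scaleR)
    also have "\<dots> = c *\<^sub>R (Z *v (U1 *v x))"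
      unfolding U1eq c_def using bp
      by (simp add: scaleR_matrix_vector_assoc[symmetric] matrix_vector_mult_scaleR)
    finally show ?thesis .
  qed
  have key: "(Z *v (U1 *v x)) \<bullet> (U1 *v (Z *v (U1 *v x))) \<le> x \<bullet> (U1 *v x)" for x
  proof -
    define y where "y = Z *v (U1 *v x)"
    have "im_mat U1 = im_mat L1" by (rule im_eq) (simp add: U1T kU1 kL1T)
    then obtain t where t: "U1 *v x = L1 *v t" unfolding im_mat_def by (metis rangeE rangeI)
    have Ly: "L1 *v y = U1 *v x"
      unfolding y_def t using mpf(1) by (simp add: matrix_vector_mul_assoc matrix_mul_assoc)
    have e1: "y \<bullet> (U1 *v y) = y \<bullet> (U1 *v x)"
      using quad_sym[of y L1] Ly unfolding U1_def by simp
    have e2: "x \<bullet> (U1 *v y) = y \<bullet> (U1 *v x)"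
      using inner_transpose[of U1 x y] U1T by (simp add: inner_commute)
    have "0 \<le> (y - x) \<bullet> (U1 *v (y - x))" by (rule qU1)
    also have "\<dots> = y \<bullet> (U1 *v y) - y \<bullet> (U1 *v x) - x \<bullet> (U1 *v y) + x \<bullet> (U1 *v x)"
      by (simp add: matrix_vector_mult_diff_distrib inner_diff_left inner_diff_right)
    finally show ?thesis using e1 e2 unfolding y_def by linarith
  qed
  have bound: "hnorm U1 ((proj_im L0 - Z ** L0) *v x) / hnorm U1 x \<le> c" for x
  proof -
    define y where "y = Z *v (U1 *v x)"
    have "hnorm U1 ((proj_im L0 - Z ** L0) *v x) = sqrt (c^2 * (y \<bullet> (U1 *v y)))"
      unfolding hnorm_def diff y_def
      by (simp add: matrix_vector_mult_scaleR power2_eq_square algebra_simps)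
    also have "\<dots> = c * sqrt (y \<bullet> (U1 *v y))" using c0 by (simp add: real_sqrt_mult)
    also have "\<dots> \<le> c * hnorm U1 x"
      unfolding hnorm_def using key[of x] c0 by (simp add: y_def mult_left_mono)
    finally have h: "hnorm U1 ((proj_im L0 - Z ** L0) *v x) \<le> c * hnorm U1 x" .
    show ?thesis
    proof (cases "hnorm U1 x = 0")
      case True then show ?thesis using c0 by simp
    next
      case False
      have "0 \<le> hnorm U1 x" unfolding hnorm_def using qU1[of x] by simp
      then have "0 < hnorm U1 x" using False by simp
      then show ?thesis using h by (simp add: divide_le_eq)
    qed
  qed
  have ne: "((\<chi> i. 1)::real^'n) \<noteq> 0" by (simp add: vec_eq_iff)
  have hop: "hopnorm U1 (proj_im L0 - Z ** L0) \<le> c"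
    unfolding hopnorm_def
    by (rule cSup_least) (use ne bound in auto)
  have kers: "ker_mat U1 = {x. cst w x}" "ker_mat L0 = {x. cst w x}" "ker_mat (transpose L0) = {x. cst w x}"
    "ker_mat Z = {x. cst w x}" "ker_mat (transpose Z) = {x. cst w x}"
    unfolding ker_mat_def using kU1 kL0 kL0T kZ kZT by auto
  show ?thesis
    unfolding approx_pinv_def c_eq
    using psdU1 kers hop
    by (simp add: L0_def[symmetric] L1_def[symmetric] U1_def[symmetric] Z_def[symmetric])
qed


end
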